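(* Let $m\geq 3$ and let $S(m)$ be the star with center $r$ and leaves $1,2,\dots,m$, with variables $x_r,x_1,\dots,x_m$. Then $\gamma(S(m))=2$; for each $1\leq k\leq m-2$, \[ I_{2+k}(S(m),X)=\left\langle \prod_{s=1}^k x_{j_s}\;\middle|\; 1\leq j_1<\cdots<j_k\leq m\right\rangle; \] and \[ I_{m+1}(S(m),X)=\Big\langle x_rx_1\cdots x_m-\sum_{i=1}^m \prod_{j\neq i} x_j\Big\rangle. \]
   Context: For a graph $G$ with vertex set $V$, $L(G,X_G)$ is the matrix with diagonal entries $x_u$ ($u\in V$) and off-diagonal entries $-m_{uv}$, $m_{uv}$ the number of edges between $u$ and $v$; $I_j(G,X_G)\subseteq\mathbb{Z}[X_G]$ is the ideal generated by all $j\times j$ minors of $L(G,X_G)$, and $\gamma(G)=\max\{j\mid I_j(G,X_G)=\mathbb{Z}[X_G]\}$. *)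

theory Defs
  imports "HOL-Library.Poly_Mapping" "Jordan_Normal_Form.Determinant" "Jordan_Normal_Form.DL_Submatrix"
begin

text \<open>Multivariate integer polynomials Z[X]: variables indexed by nat (vertex names),
  monomials are finitely supported exponent maps.\<close>
type_synonym zpoly = "(nat \<Rightarrow>\<^sub>0 nat) \<Rightarrow>\<^sub>0 int"

definition Var :: "nat \<Rightarrow> zpoly" where
  "Var i = Poly_Mapping.single (Poly_Mapping.single i 1) 1"

definition ideal_gen :: "'a::comm_ring_1 set \<Rightarrow> 'a set" where
  "ideal_gen S = {x. \<exists>F c. finite F \<and> F \<subseteq> S \<and> x = (\<Sum>s\<in>F. c s * s)}"

text \<open>A multigraph on vertex set {0..<n} given by the multiplicity function mu
  (mu u v = number of edges between u and v). Generalized Laplacian L(G,X_G).\<close>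
definition genlap :: "nat \<Rightarrow> (nat \<Rightarrow> nat \<Rightarrow> nat) \<Rightarrow> zpoly mat" where
  "genlap n mu = mat n n (\<lambda>(u,v). if u = v then Var u else - of_nat (mu u v))"

definition minors :: "'a::comm_ring_1 mat \<Rightarrow> nat \<Rightarrow> 'a set" where
  "minors A j = {det (submatrix A I J) | I J.
      I \<subseteq> {..<dim_row A} \<and> J \<subseteq> {..<dim_col A} \<and> card I = j \<and> card J = j}"

definition crit_ideal :: "nat \<Rightarrow> (nat \<Rightarrow> nat \<Rightarrow> nat) \<Rightarrow> nat \<Rightarrow> zpoly set" where
  "crit_ideal n mu j = ideal_gen (minors (genlap n mu) j)"

definition algco :: "nat \<Rightarrow> (nat \<Rightarrow> nat \<Rightarrow> nat) \<Rightarrow> nat" where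
  "algco n mu = (GREATEST j. crit_ideal n mu j = UNIV)"

text \<open>Star S(m): center r = vertex 0, leaves 1..m; vertex set {0..<m+1}.\<close>
definition star_mu :: "nat \<Rightarrow> nat \<Rightarrow> nat" where
  "star_mu u v = (if u \<noteq> v \<and> (u = 0 \<or> v = 0) then 1 else 0)"

end

theory Submission
  imports Defs
begin


lemma ideal_gen_in: "s \<in> S \<Longrightarrow> s \<in> ideal_gen S"
  unfolding ideal_gen_def by (rule CollectI, rule exI[of _ "{s}"], rule exI[of _ "\<lambda>_. 1"]) auto

lemma ideal_gen_0: "0 \<in> ideal_gen S"
  unfolding ideal_gen_def by (rule CollectI, rule exI[of _ "{}"]) auto

lemma ideal_gen_add:
  assumes "x \<in> ideal_gen S" "y \<in> ideal_gen S" shows "x + y \<in> ideal_gen S"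
proof -
  obtain F1 c1 where 1: "finite F1" "F1 \<subseteq> S" "x = (\<Sum>s\<in>F1. c1 s * s)" using assms(1) unfolding ideal_gen_def by auto
  obtain F2 c2 where 2: "finite F2" "F2 \<subseteq> S" "y = (\<Sum>s\<in>F2. c2 s * s)" using assms(2) unfolding ideal_gen_def by auto
  have x0: "x = (\<Sum>s\<in>F1 \<union> F2. if s \<in> F1 then c1 s * s else 0)"
    using sum.inter_restrict[of "F1 \<union> F2" "\<lambda>s. c1 s * s" F1] 1 2 by (simp add: Int_absorb1)
  have x: "x = (\<Sum>s\<in>F1 \<union> F2. (if s \<in> F1 then c1 s else 0) * s)"
    unfolding x0 by (rule sum.cong) auto
  have y0: "y = (\<Sum>s\<in>F1 \<union> F2. if s \<in> F2 then c2 s * s else 0)"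
    using sum.inter_restrict[of "F1 \<union> F2" "\<lambda>s. c2 s * s" F2] 1 2 by (simp add: Int_absorb1)
  have y: "y = (\<Sum>s\<in>F1 \<union> F2. (if s \<in> F2 then c2 s else 0) * s)"
    unfolding y0 by (rule sum.cong) auto
  have "x + y = (\<Sum>s\<in>F1 \<union> F2. ((if s \<in> F1 then c1 s else 0) + (if s \<in> F2 then c2 s else 0)) * s)"
    unfolding x y sum.distrib[symmetric] by (simp add: distrib_right)
  then show ?thesis unfolding ideal_gen_def
    by (intro CollectI exI[of _ "F1 \<union> F2"] exI[of _ "\<lambda>s. (if s \<in> F1 then c1 s else 0) + (if s \<in> F2 then c2 s else 0)"])
       (use 1 2 in auto)
qed

lemma ideal_gen_mult:
  assumes "x \<in> ideal_gen S" shows "r * x \<in> ideal_gen S"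
proof -
  obtain F c where 1: "finite F" "F \<subseteq> S" "x = (\<Sum>s\<in>F. c s * s)" using assms unfolding ideal_gen_def by auto
  have "r * x = (\<Sum>s\<in>F. (r * c s) * s)" unfolding 1 sum_distrib_left by (simp add: mult.assoc)
  then show ?thesis unfolding ideal_gen_def
    by (intro CollectI exI[of _ F] exI[of _ "\<lambda>s. r * c s"]) (use 1 in auto)
qed

lemma ideal_gen_sum:
  assumes "\<And>a. a \<in> A \<Longrightarrow> f a \<in> ideal_gen S" shows "sum f A \<in> ideal_gen S"
  using assms
proof (induction A rule: infinite_finite_induct)
  case (infinite A) then show ?case by (simp add: ideal_gen_0)
next
  case empty then show ?case by (simp add: ideal_gen_0)
next
  case (insert x F) then show ?case by (simp add: ideal_gen_add)
qed

lemma ideal_gen_subset: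
  assumes "S \<subseteq> ideal_gen T" shows "ideal_gen S \<subseteq> ideal_gen T"
proof
  fix x assume "x \<in> ideal_gen S"
  then obtain F c where 1: "finite F" "F \<subseteq> S" "x = (\<Sum>s\<in>F. c s * s)" unfolding ideal_gen_def by auto
  show "x \<in> ideal_gen T" unfolding 1(3)
  proof (rule ideal_gen_sum)
    fix a assume "a \<in> F"
    then have "a \<in> ideal_gen T" using 1(2) assms by blast
    then show "c a * a \<in> ideal_gen T" by (rule ideal_gen_mult)
  qed
qed

lemma ideal_gen_UNIV: "(1::'a::comm_ring_1) \<in> ideal_gen S \<Longrightarrow> ideal_gen S = UNIV"
proof -
  assume "1 \<in> ideal_gen S"
  then have "\<And>r. r * 1 \<in> ideal_gen S" by (rule ideal_gen_mult)
  then show ?thesis by auto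
qed

definition cterm :: "zpoly \<Rightarrow> int" where "cterm p = Poly_Mapping.lookup p 0"

lemma add_eq_0_pm: "(l::nat \<Rightarrow>\<^sub>0 nat) + q = 0 \<longleftrightarrow> l = 0 \<and> q = 0"
proof
  assume h: "l + q = 0"
  have "\<And>i. Poly_Mapping.lookup l i + Poly_Mapping.lookup q i = 0"
    using h by (metis Poly_Mapping.lookup_add Poly_Mapping.lookup_zero)
  then have "\<And>i. Poly_Mapping.lookup l i = Poly_Mapping.lookup 0 i \<and> Poly_Mapping.lookup q i = Poly_Mapping.lookup 0 i"
    by simp
  then show "l = 0 \<and> q = 0" by (simp add: poly_mapping_eqI)
qed simp

lemma cterm_mult: "cterm (f * g) = cterm f * cterm g"
proof -
  have "\<And>l. Sum_any (\<lambda>q. Poly_Mapping.lookup g q when 0 = l + q) = (Poly_Mapping.lookup g 0 when l = 0)"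
  proof -
    fix l :: "nat \<Rightarrow>\<^sub>0 nat"
    have "Sum_any (\<lambda>q. Poly_Mapping.lookup g q when 0 = l + q) = Sum_any (\<lambda>q::nat \<Rightarrow>\<^sub>0 nat. (Poly_Mapping.lookup g 0 when l = 0) when q = 0)"
    proof -
      have "(\<lambda>q. Poly_Mapping.lookup g q when 0 = l + q) = (\<lambda>q. (Poly_Mapping.lookup g 0 when l = 0) when q = 0)"
        by (rule ext) (auto simp: add_eq_0_pm when_def)
      then show ?thesis by (simp only:)
    qed
    also have "\<dots> = (Poly_Mapping.lookup g 0 when l = 0)" by (rule Sum_any_when_equal)
    finally show "Sum_any (\<lambda>q. Poly_Mapping.lookup g q when 0 = l + q) = (Poly_Mapping.lookup g 0 when l = 0)" .
  qed
  then have "Poly_Mapping.lookup (f * g) 0 = Sum_any (\<lambda>l. Poly_Mapping.lookup f l * (Poly_Mapping.lookup g 0 when l = 0))"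
    unfolding Poly_Mapping.lookup_mult by (simp only:)
  also have "\<dots> = Sum_any (\<lambda>l. (Poly_Mapping.lookup f l * Poly_Mapping.lookup g 0) when l = 0)"
    by (simp only: mult_when)
  also have "\<dots> = Poly_Mapping.lookup f 0 * Poly_Mapping.lookup g 0"
    by (rule Sum_any_when_equal)
  finally show ?thesis unfolding cterm_def .
qed

lemma cterm_add: "cterm (f + g) = cterm f + cterm g" unfolding cterm_def by (simp add: lookup_add)
lemma cterm_one: "cterm 1 = 1" unfolding cterm_def by simp
lemma cterm_Var: "cterm (Var i) = 0" unfolding cterm_def Var_def
proof -
  have "Poly_Mapping.single i (1::nat) \<noteq> 0"
  proof
    assume "Poly_Mapping.single i (1::nat) = 0"
    then have "Poly_Mapping.lookup (Poly_Mapping.single i (1::nat)) i = Poly_Mapping.lookup 0 i" by simp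
    then show False by simp
  qed
  then show "Poly_Mapping.lookup (Poly_Mapping.single (Poly_Mapping.single i (1::nat)) (1::int)) 0 = 0"
    by (rule Poly_Mapping.lookup_single_not_eq)
qed

lemma cterm_prod: "cterm (prod f A) = (\<Prod>a\<in>A. cterm (f a))"
proof (induction A rule: infinite_finite_induct)
  case (infinite A) then show ?case by (simp add: cterm_one)
next
  case empty then show ?case by (simp add: cterm_one)
next
  case (insert x F) then show ?case by (simp add: cterm_mult)
qed

lemma cterm_ideal:
  assumes "\<And>s. s \<in> S \<Longrightarrow> cterm s = 0" "x \<in> ideal_gen S" shows "cterm x = 0"
proof -
  obtain F c where 1: "finite F" "F \<subseteq> S" "x = (\<Sum>s\<in>F. c s * s)" using assms unfolding ideal_gen_def by auto
  have "\<And>B. finite B \<Longrightarrow> B \<subseteq> S \<Longrightarrow> cterm (\<Sum>s\<in>B. c s * s) = 0"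
  proof -
    fix B :: "zpoly set" assume "finite B" "B \<subseteq> S" then show "cterm (\<Sum>s\<in>B. c s * s) = 0"
    proof (induction B rule: finite_induct)
      case empty then show ?case by (simp add: cterm_def)
    next
      case (insert y F)
      then have "cterm (c y * y) = 0" using assms(1) by (simp add: cterm_mult)
      then show ?case using insert by (simp add: cterm_add)
    qed
  qed
  then show ?thesis using 1 by auto
qed



lemma pick_bij: assumes "finite I" shows "bij_betw (pick I) {0..<card I} I"
proof -
  have mono: "pick I a < pick I b" if "a < b" "b < card I" for a b
    using pick_mono[of b I a] that by simp
  have inj: "inj_on (pick I) {0..<card I}"
  proof (rule inj_onI)
    fix a b assume ab: "a \<in> {0..<card I}" "b \<in> {0..<card I}" "pick I a = pick I b"
    show "a = b"
    proof (rule ccontr)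
      assume "a \<noteq> b"
      then consider "a < b" | "b < a" by linarith
      then show False
      proof cases
        case 1 then show False using mono[of a b] ab by simp
      next
        case 2 then show False using mono[of b a] ab by simp
      qed
    qed
  qed
  have sub: "pick I ` {0..<card I} \<subseteq> I"
  proof
    fix x assume "x \<in> pick I ` {0..<card I}"
    then obtain n where n: "n < card I" "x = pick I n" by auto
    then show "x \<in> I" using pick_in_set[of n I] by simp
  qed
  have "card (pick I ` {0..<card I}) = card I" using card_image[OF inj] by simp
  then have "pick I ` {0..<card I} = I" using card_subset_eq[OF assms sub] by simp
  then show ?thesis using inj unfolding bij_betw_def by simp
qed

lemma set_lt_eq: "I \<subseteq> {..<N} \<Longrightarrow> {i. i < N \<and> i \<in> I} = I" by auto

lemma submatrix_carrier:
  assumes "A \<in> carrier_mat N N" "I \<subseteq> {..<N}" "J \<subseteq> {..<N}"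
  shows "submatrix A I J \<in> carrier_mat (card I) (card J)"
proof -
  have "dim_row A = N" "dim_col A = N" using assms(1) by auto
  then show ?thesis unfolding carrier_mat_def using set_lt_eq[OF assms(2)] set_lt_eq[OF assms(3)]
    by (simp add: dim_submatrix)
qed

lemma submatrix_idx:
  assumes "A \<in> carrier_mat N N" "I \<subseteq> {..<N}" "J \<subseteq> {..<N}" "i < card I" "j < card J"
  shows "submatrix A I J $$ (i,j) = A $$ (pick I i, pick J j)"
proof -
  have "dim_row A = N" "dim_col A = N" using assms(1) by auto
  then show ?thesis using assms(4,5) set_lt_eq[OF assms(2)] set_lt_eq[OF assms(3)]
    by (intro submatrix_index) simp_all
qed

lemma sub_prod:
  assumes A: "A \<in> carrier_mat N N" and I: "I \<subseteq> {..<N}" and J: "J \<subseteq> {..<N}"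
    and cI: "card I = s" and cJ: "card J = s" and p: "p permutes {0..<s}"
  shows "bij_betw (\<lambda>u. pick J (p (inv_into {0..<s} (pick I) u))) I J"
    and "(\<Prod>i=0..<s. submatrix A I J $$ (i, p i)) = (\<Prod>u\<in>I. A $$ (u, pick J (p (inv_into {0..<s} (pick I) u))))"
proof -
  have fI: "finite I" using I finite_subset by blast
  have fJ: "finite J" using J finite_subset by blast
  have bI: "bij_betw (pick I) {0..<s} I" using pick_bij[OF fI] cI by simp
  have bJ: "bij_betw (pick J) {0..<s} J" using pick_bij[OF fJ] cJ by simp
  have bp: "bij_betw p {0..<s} {0..<s}" using p by (rule permutes_imp_bij)
  have bIi: "bij_betw (inv_into {0..<s} (pick I)) I {0..<s}" using bI by (rule bij_betw_inv_into)
  show "bij_betw (\<lambda>u. pick J (p (inv_into {0..<s} (pick I) u))) I J"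
    using bij_betw_trans[OF bij_betw_trans[OF bIi bp] bJ] by (simp add: comp_def)
  have "(\<Prod>i=0..<s. submatrix A I J $$ (i, p i)) = (\<Prod>i\<in>{0..<s}. A $$ (pick I i, pick J (p i)))"
  proof (rule prod.cong)
    fix i assume "i \<in> {0..<s}"
    then have "i < card I" "p i < card J" using cI cJ p by (auto simp: permutes_in_image)
    then show "submatrix A I J $$ (i, p i) = A $$ (pick I i, pick J (p i))"
      using submatrix_idx[OF A I J] by blast
  qed simp
  also have "\<dots> = (\<Prod>i\<in>{0..<s}. (\<lambda>u. A $$ (u, pick J (p (inv_into {0..<s} (pick I) u)))) (pick I i))"
  proof (rule prod.cong)
    fix i assume "i \<in> {0..<s}"
    then have "inv_into {0..<s} (pick I) (pick I i) = i"
      using bI by (simp add: bij_betw_def inv_into_f_f)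
    then show "A $$ (pick I i, pick J (p i)) = (\<lambda>u. A $$ (u, pick J (p (inv_into {0..<s} (pick I) u)))) (pick I i)"
      by simp
  qed simp
  also have "\<dots> = (\<Prod>u\<in>I. A $$ (u, pick J (p (inv_into {0..<s} (pick I) u))))"
    by (rule prod.reindex_bij_betw[OF bI])
  finally show "(\<Prod>i=0..<s. submatrix A I J $$ (i, p i)) = (\<Prod>u\<in>I. A $$ (u, pick J (p (inv_into {0..<s} (pick I) u))))" .
qed

lemma det_sub_ideal:
  assumes A: "A \<in> carrier_mat N N" and I: "I \<subseteq> {..<N}" and J: "J \<subseteq> {..<N}"
    and c: "card I = card J"
    and H: "\<And>h. bij_betw h I J \<Longrightarrow> (\<Prod>u\<in>I. A $$ (u, h u)) \<in> ideal_gen S"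
  shows "det (submatrix A I J) \<in> ideal_gen S"
proof -
  have car: "submatrix A I J \<in> carrier_mat (card I) (card I)" using submatrix_carrier[OF A I J] c by simp
  show ?thesis unfolding det_def'[OF car]
  proof (rule ideal_gen_sum)
    fix p assume "p \<in> {p. p permutes {0..<card I}}"
    then have p: "p permutes {0..<card I}" by simp
    have "(\<Prod>i=0..<card I. submatrix A I J $$ (i, p i)) \<in> ideal_gen S"
      unfolding sub_prod(2)[OF A I J refl c[symmetric] p]
      by (rule H, rule sub_prod(1)[OF A I J refl c[symmetric] p])
    then show "signof p * (\<Prod>i=0..<card I. submatrix A I J $$ (i, p i)) \<in> ideal_gen S"
      by (rule ideal_gen_mult)
  qed
qed

lemma det_sub_unique:
  assumes A: "A \<in> carrier_mat N N" and I: "I \<subseteq> {..<N}" and J: "J \<subseteq> {..<N}"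
    and c: "card I = card J" and g: "bij_betw g I J"
    and U: "\<And>h. bij_betw h I J \<Longrightarrow> (\<forall>u\<in>I. A $$ (u, h u) \<noteq> 0) \<Longrightarrow> (\<forall>u\<in>I. h u = g u)"
  shows "\<exists>e. (e = 1 \<or> e = -1) \<and> det (submatrix A I J) = e * (\<Prod>u\<in>I. A $$ (u, g u))"
proof -
  define s where "s = card I"
  have cI: "card I = s" and cJ: "card J = s" using c s_def by auto
  have car: "submatrix A I J \<in> carrier_mat s s" using submatrix_carrier[OF A I J] cI cJ by simp
  have fI: "finite I" using I finite_subset by blast
  have fJ: "finite J" using J finite_subset by blast
  have bI: "bij_betw (pick I) {0..<s} I" using pick_bij[OF fI] cI by simp
  have bJ: "bij_betw (pick J) {0..<s} J" using pick_bij[OF fJ] cJ by simp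
  have bJi: "bij_betw (inv_into {0..<s} (pick J)) J {0..<s}" using bJ by (rule bij_betw_inv_into)
  define f where "f = (\<lambda>i. if i < s then inv_into {0..<s} (pick J) (g (pick I i)) else i)"
  have bf0: "bij_betw (\<lambda>i. inv_into {0..<s} (pick J) (g (pick I i))) {0..<s} {0..<s}"
    using bij_betw_trans[OF bij_betw_trans[OF bI g] bJi] by (simp add: comp_def)
  have "bij_betw f {0..<s} {0..<s} = bij_betw (\<lambda>i. inv_into {0..<s} (pick J) (g (pick I i))) {0..<s} {0..<s}"
    by (rule bij_betw_cong) (simp add: f_def)
  then have bf: "bij_betw f {0..<s} {0..<s}" using bf0 by simp
  have fst: "\<And>x. x \<notin> {0..<s} \<Longrightarrow> f x = x" by (simp add: f_def)
  have fp: "f permutes {0..<s}" by (rule bij_imp_permutes[OF bf fst])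
  define trm where "trm = (\<lambda>p. signof p * (\<Prod>i=0..<s. submatrix A I J $$ (i, p i)) :: 'a)"
  have zero: "trm p = 0" if p: "p \<in> {p. p permutes {0..<s}} - {f}" for p
  proof (rule ccontr)
    assume nz: "trm p \<noteq> 0"
    from p have pp: "p permutes {0..<s}" and pf: "p \<noteq> f" by auto
    let ?H = "\<lambda>u. pick J (p (inv_into {0..<s} (pick I) u))"
    have prodnz: "(\<Prod>u\<in>I. A $$ (u, ?H u)) \<noteq> 0"
    proof
      assume "(\<Prod>u\<in>I. A $$ (u, ?H u)) = 0"
      then have "trm p = 0" unfolding trm_def sub_prod(2)[OF A I J cI cJ pp] by simp
      then show False using nz by simp
    qed
    have "\<forall>u\<in>I. A $$ (u, ?H u) \<noteq> 0"
      using prodnz fI prod_zero[of I "\<lambda>u. A $$ (u, ?H u)"] by blast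
    then have Hg: "\<forall>u\<in>I. ?H u = g u" using U sub_prod(1)[OF A I J cI cJ pp] by blast
    have "p = f"
    proof
      fix i show "p i = f i"
      proof (cases "i < s")
        case True
        have inv: "inv_into {0..<s} (pick I) (pick I i) = i"
          using bI True by (simp add: bij_betw_def inv_into_f_f)
        have "pick I i \<in> I" using bI True by (auto simp: bij_betw_def)
        then have "?H (pick I i) = g (pick I i)" using Hg by blast
        then have e1: "pick J (p i) = g (pick I i)" using inv by simp
        have pi: "p i \<in> {0..<s}" using pp True by (simp add: permutes_in_image)
        have "inv_into {0..<s} (pick J) (pick J (p i)) = p i"
          using bJ pi by (simp add: bij_betw_def inv_into_f_f)
        then have "inv_into {0..<s} (pick J) (g (pick I i)) = p i" using e1 by simp
        then show ?thesis using True by (simp add: f_def)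
      next
        case False
        then show ?thesis using pp by (simp add: f_def permutes_not_in)
      qed
    qed
    then show False using pf by simp
  qed
  have "det (submatrix A I J) = sum trm {p. p permutes {0..<s}}"
    unfolding det_def'[OF car] trm_def by simp
  also have "\<dots> = trm f + sum trm ({p. p permutes {0..<s}} - {f})"
    by (rule sum.remove[OF finite_permutations[of "{0..<s}"]]) (simp_all add: fp)
  also have "sum trm ({p. p permutes {0..<s}} - {f}) = 0"
    by (rule sum.neutral) (intro ballI zero)
  also have "trm f = signof f * (\<Prod>u\<in>I. A $$ (u, g u))"
  proof -
    let ?H = "\<lambda>u. pick J (f (inv_into {0..<s} (pick I) u))"
    have "\<And>u. u \<in> I \<Longrightarrow> ?H u = g u"
    proof -
      fix u assume u: "u \<in> I"
      have i: "inv_into {0..<s} (pick I) u \<in> {0..<s}" using bI u by (metis bij_betw_def inv_into_into)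
      have pi: "pick I (inv_into {0..<s} (pick I) u) = u" using bI u by (metis bij_betw_def f_inv_into_f)
      have gu: "g u \<in> pick J ` {0..<s}" using g bJ u by (auto simp: bij_betw_def)
      show "?H u = g u" using i pi gu by (simp add: f_def f_inv_into_f)
    qed
    then show ?thesis unfolding trm_def sub_prod(2)[OF A I J cI cJ fp] by (simp cong: prod.cong)
  qed
  finally have "det (submatrix A I J) = signof f * (\<Prod>u\<in>I. A $$ (u, g u))" by simp
  moreover have "(signof f :: 'a) = 1 \<or> signof f = (-1 :: 'a)" using signof_pm_one[of f] by auto
  ultimately show ?thesis by (intro exI[of _ "signof f"]) simp
qed



abbreviation LL :: "nat \<Rightarrow> zpoly mat" where "LL m \<equiv> genlap (m+1) star_mu"

definition GG :: "nat \<Rightarrow> nat \<Rightarrow> zpoly set" where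
  "GG m k = {(\<Prod>s\<in>J. Var s) | J. J \<subseteq> {1..m} \<and> card J = k}"

lemma L_carrier: "genlap N mu \<in> carrier_mat N N"
  unfolding genlap_def by simp

lemma L_ent: "u < m+1 \<Longrightarrow> v < m+1 \<Longrightarrow>
  LL m $$ (u,v) = (if u = v then Var u else if u = 0 \<or> v = 0 then -1 else 0)"
  unfolding genlap_def star_mu_def by simp

lemma minors_L: "minors (LL m) j = {det (submatrix (LL m) I J) | I J.
      I \<subseteq> {..<m+1} \<and> J \<subseteq> {..<m+1} \<and> card I = j \<and> card J = j}"
  unfolding minors_def using L_carrier[of "m+1" star_mu] by simp

lemma term_in:
  assumes I: "I \<subseteq> {..<m+1}" and J: "J \<subseteq> {..<m+1}" and s: "2 \<le> card I"
    and h: "bij_betw h I J"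
  shows "(\<Prod>u\<in>I. LL m $$ (u, h u)) \<in> ideal_gen (GG m (card I - 2))"
proof (cases "\<exists>u\<in>I. LL m $$ (u, h u) = 0")
  case True
  have fI: "finite I" using I finite_subset by blast
  have "(\<Prod>u\<in>I. LL m $$ (u, h u)) = 0" by (rule prod_zero[OF fI True])
  then show ?thesis by (simp add: ideal_gen_0)
next
  case False
  have fI: "finite I" using I finite_subset by blast
  define U where "U = {u\<in>I. u \<noteq> 0 \<and> h u \<noteq> 0}"
  have hU: "h u = u" if "u \<in> U" for u
  proof -
    have u: "u \<in> I" "u \<noteq> 0" "h u \<noteq> 0" using that U_def by auto
    have "u < m+1" "h u < m+1" using u I J h by (auto simp: bij_betw_def)
    then have e: "LL m $$ (u, h u) = (if u = h u then Var u else if u = 0 \<or> h u = 0 then -1 else 0)"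
      by (rule L_ent)
    show ?thesis
    proof (rule ccontr)
      assume "h u \<noteq> u"
      then have "LL m $$ (u, h u) = 0" using e u by simp
      then show False using False u(1) by blast
    qed
  qed
  have ent: "LL m $$ (u, h u) = Var u" if "u \<in> U" for u
  proof -
    have "u < m+1" using that U_def I by auto
    then show ?thesis using hU[OF that] L_ent[of u m u] by simp
  qed
  have Z: "card {u\<in>I. h u = 0} \<le> 1"
  proof -
    have "inj_on h I" using h unfolding bij_betw_def by simp
    then have "inj_on h {u\<in>I. h u = 0}" by (rule inj_on_subset) auto
    then have "card {u\<in>I. h u = 0} \<le> card {0::nat}" by (rule card_inj_on_le) auto
    then show ?thesis by simp
  qed
  have sub: "I - U \<subseteq> insert 0 {u\<in>I. h u = 0}" unfolding U_def by auto
  have "card (I - U) \<le> card (insert 0 {u\<in>I. h u = 0})"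
    by (rule card_mono[OF _ sub]) (use fI in simp)
  also have "\<dots> \<le> Suc (card {u\<in>I. h u = 0})" using fI by (simp add: card_insert_if)
  finally have cIU: "card (I - U) \<le> 2" using Z by simp
  have UI: "U \<subseteq> I" unfolding U_def by auto
  have "card I = card U + card (I - U)"
    using card_Diff_subset[OF finite_subset[OF UI fI] UI] card_mono[OF fI UI] by simp
  then have cU: "card I - 2 \<le> card U" using cIU by simp
  obtain T where T: "T \<subseteq> U" "card T = card I - 2" "finite T"
    using obtain_subset_with_card_n[OF cU] by blast
  have fU: "finite U" using finite_subset[OF UI fI] .
  have U1m: "U \<subseteq> {1..m}" using I unfolding U_def by auto
  have gen: "(\<Prod>s\<in>T. Var s) \<in> GG m (card I - 2)"
    unfolding GG_def by (rule CollectI, rule exI[of _ T]) (use T U1m in auto)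
  have "(\<Prod>u\<in>I. LL m $$ (u, h u)) = (\<Prod>u\<in>U. LL m $$ (u, h u)) * (\<Prod>u\<in>I - U. LL m $$ (u, h u))"
    using prod.subset_diff[OF UI fI] by (simp add: mult.commute)
  also have "(\<Prod>u\<in>U. LL m $$ (u, h u)) = (\<Prod>u\<in>U. Var u)"
    by (rule prod.cong[OF refl ent])
  also have "\<dots> = (\<Prod>u\<in>T. Var u) * (\<Prod>u\<in>U - T. Var u)"
    using prod.subset_diff[OF T(1) fU] by (simp add: mult.commute)
  finally have "(\<Prod>u\<in>I. LL m $$ (u, h u)) = ((\<Prod>u\<in>U - T. Var u) * (\<Prod>u\<in>I - U. LL m $$ (u, h u))) * (\<Prod>u\<in>T. Var u)"
    by (simp add: ac_simps)
  then show ?thesis using ideal_gen_mult[OF ideal_gen_in[OF gen]] by simp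
qed

lemma crit_sub:
  assumes "2 \<le> s"
  shows "crit_ideal (m+1) star_mu s \<subseteq> ideal_gen (GG m (s - 2))"
  unfolding crit_ideal_def
proof (rule ideal_gen_subset)
  show "minors (LL m) s \<subseteq> ideal_gen (GG m (s - 2))"
  proof
    fix x assume "x \<in> minors (LL m) s"
    then obtain I J where IJ: "I \<subseteq> {..<m+1}" "J \<subseteq> {..<m+1}" "card I = s" "card J = s"
      and x: "x = det (submatrix (LL m) I J)" unfolding minors_L by blast
    show "x \<in> ideal_gen (GG m (s - 2))" unfolding x
    proof (rule det_sub_ideal[OF L_carrier IJ(1,2)])
      show "card I = card J" using IJ by simp
      fix h assume hb: "bij_betw h I J"
      have "2 \<le> card I" using IJ(3) assms by simp
      from term_in[OF IJ(1,2) this hb] show "(\<Prod>u\<in>I. LL m $$ (u, h u)) \<in> ideal_gen (GG m (s - 2))"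
        using IJ(3) by simp
    qed
  qed
qed



lemma minor_in_crit:
  assumes "I \<subseteq> {..<m+1}" "J \<subseteq> {..<m+1}" "card I = s" "card J = s"
  shows "det (submatrix (LL m) I J) \<in> crit_ideal (m+1) star_mu s"
  unfolding crit_ideal_def
  by (rule ideal_gen_in) (unfold minors_L, use assms in blast)

lemma prod_in_crit:
  assumes T: "T \<subseteq> {1..m}" and k: "card T + 2 \<le> m"
  shows "(\<Prod>s\<in>T. Var s) \<in> crit_ideal (m+1) star_mu (card T + 2)"
proof -
  have fT: "finite T" using T finite_subset by blast
  have "card ({1..m} - T) = m - card T" using card_Diff_subset[OF fT T] by simp
  then have c2: "card ({1..m} - T) \<ge> 2" using k by simp
  have "{1..m} - T \<noteq> {}"
  proof
    assume E: "{1..m} - T = {}"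
    have "card ({1..m} - T) = 0" by (subst E) (rule card.empty)
    then show False using c2 by linarith
  qed
  then obtain i where i: "i \<in> {1..m}" "i \<notin> T" by blast
  have c1: "card ({1..m} - T - {i}) \<ge> 1" using c2 i by (simp add: card_Diff_singleton)
  have "{1..m} - T - {i} \<noteq> {}"
  proof
    assume E: "{1..m} - T - {i} = {}"
    have "card ({1..m} - T - {i}) = 0" by (subst E) (rule card.empty)
    then show False using c1 by linarith
  qed
  then obtain j where j: "j \<in> {1..m}" "j \<notin> T" "j \<noteq> i" by blast
  have T0: "0 \<notin> T" using T by auto
  define I where "I = insert 0 (insert i T)"
  define J where "J = insert 0 (insert j T)"
  define g where "g = (\<lambda>u::nat. if u = 0 then j else if u = i then 0 else u)"
  have I1: "I \<subseteq> {..<m+1}" using T i unfolding I_def by auto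
  have J1: "J \<subseteq> {..<m+1}" using T j unfolding J_def by auto
  have cI: "card I = card T + 2" unfolding I_def using fT i T0 by simp
  have cJ: "card J = card T + 2" unfolding J_def using fT j T0 by simp
  have gb: "bij_betw g I J"
  proof -
    have "inj_on g I" unfolding inj_on_def I_def g_def using i j T0 by auto
    moreover have "g ` I = J" unfolding I_def J_def g_def using i j T0 by auto
    ultimately show ?thesis unfolding bij_betw_def by simp
  qed
  have uniq: "\<forall>u\<in>I. h u = g u" if hb: "bij_betw h I J" and nz: "\<forall>u\<in>I. LL m $$ (u, h u) \<noteq> 0" for h
  proof -
    have hJ: "h u \<in> J" if "u \<in> I" for u using hb that by (auto simp: bij_betw_def)
    have hinj: "inj_on h I" using hb by (simp add: bij_betw_def)
    have red: "h u = 0" if u: "u \<in> I" "u \<noteq> 0" "h u \<noteq> u" for u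
    proof (rule ccontr)
      assume h0: "h u \<noteq> 0"
      have "u < m+1" "h u < m+1" using u(1) hJ[OF u(1)] I1 J1 by auto
      then have "LL m $$ (u, h u) = (if u = h u then Var u else if u = 0 \<or> h u = 0 then -1 else 0)"
        by (rule L_ent)
      then have "LL m $$ (u, h u) = 0" using u h0 by auto
      then show False using nz u(1) by blast
    qed
    have iI: "i \<in> I" unfolding I_def by simp
    have "h i \<noteq> i" using hJ[OF iI] i j unfolding J_def by auto
    then have hi: "h i = 0" using red[OF iI] i by auto
    have ht: "h t = t" if t: "t \<in> T" for t
    proof -
      have tI: "t \<in> I" using t unfolding I_def by simp
      have "t \<noteq> i" using t i by auto
      then have "h t \<noteq> h i" using hinj tI iI unfolding inj_on_def by blast
      then show ?thesis using red[OF tI] t T0 hi by auto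
    qed
    have 0: "0 \<in> I" unfolding I_def by simp
    have "h 0 \<noteq> h i" using hinj 0 iI i unfolding inj_on_def by auto
    then have a: "h 0 \<noteq> 0" using hi by simp
    have b: "h 0 \<notin> T"
    proof
      assume "h 0 \<in> T"
      then have "h (h 0) = h 0" using ht by simp
      moreover have "h 0 \<in> I" using \<open>h 0 \<in> T\<close> unfolding I_def by simp
      ultimately have "h 0 = 0" using hinj 0 unfolding inj_on_def by blast
      then show False using a by simp
    qed
    have h0: "h 0 = j" using hJ[OF 0] a b unfolding J_def by auto
    show ?thesis
    proof
      fix u assume "u \<in> I"
      then have "u = 0 \<or> u = i \<or> u \<in> T" unfolding I_def by auto
      then show "h u = g u" using h0 hi ht T0 i unfolding g_def by auto
    qed
  qed
  obtain e where e: "e = 1 \<or> e = -1" and de: "det (submatrix (LL m) I J) = e * (\<Prod>u\<in>I. LL m $$ (u, g u))"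
  proof -
    have cIJ: "card I = card J" using cI cJ by simp
    have "\<exists>e. (e = 1 \<or> e = -1) \<and> det (submatrix (LL m) I J) = e * (\<Prod>u\<in>I. LL m $$ (u, g u))"
      by (rule det_sub_unique[OF L_carrier[of "m+1" star_mu] I1 J1 cIJ gb uniq])
    then show ?thesis using that by blast
  qed
  have "(\<Prod>u\<in>I. LL m $$ (u, g u)) = LL m $$ (0, g 0) * (LL m $$ (i, g i) * (\<Prod>t\<in>T. LL m $$ (t, g t)))"
    unfolding I_def using fT i T0 by simp
  also have "(\<Prod>t\<in>T. LL m $$ (t, g t)) = (\<Prod>t\<in>T. Var t)"
  proof (rule prod.cong[OF refl])
    fix t assume t: "t \<in> T"
    then have "g t = t" "t < m+1" using T0 i T unfolding g_def by auto
    then show "LL m $$ (t, g t) = Var t" using L_ent[of t m t] by simp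
  qed
  also have "LL m $$ (0, g 0) = -1" using L_ent[of 0 m j] j unfolding g_def by simp
  also have "LL m $$ (i, g i) = -1" using L_ent[of i m 0] i unfolding g_def by auto
  finally have P: "(\<Prod>u\<in>I. LL m $$ (u, g u)) = (\<Prod>t\<in>T. Var t)" by simp
  have "(\<Prod>t\<in>T. Var t) = e * det (submatrix (LL m) I J)" using e de P by auto
  moreover have "det (submatrix (LL m) I J) \<in> crit_ideal (m+1) star_mu (card T + 2)"
    by (rule minor_in_crit[OF I1 J1 cI cJ])
  ultimately show ?thesis unfolding crit_ideal_def using ideal_gen_mult by metis
qed



lemma pick_lessThan: "i < N \<Longrightarrow> pick {..<N} i = i"
proof -
  assume i: "i < N"
  have "{a\<in>{..<N}. a < i} = {..<i}" using i by auto
  then have "card {a\<in>{..<N}. a < i} = i" by simp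
  then show ?thesis using pick_card_in_set[of i "{..<N}"] i by simp
qed

lemma submatrix_full:
  assumes A: "A \<in> carrier_mat N N" shows "submatrix A {..<N} {..<N} = A"
proof -
  have c: "submatrix A {..<N} {..<N} \<in> carrier_mat N N"
    using submatrix_carrier[OF A, of "{..<N}" "{..<N}"] by simp
  show ?thesis
  proof (rule eq_matI)
    show "dim_row (submatrix A {..<N} {..<N}) = dim_row A" using c A by simp
    show "dim_col (submatrix A {..<N} {..<N}) = dim_col A" using c A by simp
    fix i j assume "i < dim_row A" "j < dim_col A"
    then have ij: "i < N" "j < N" using A by auto
    then show "submatrix A {..<N} {..<N} $$ (i, j) = A $$ (i, j)"
      using submatrix_idx[OF A, of "{..<N}" "{..<N}" i j] pick_lessThan by simp
  qed
qed

lemma perm_cases: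
  assumes p: "p permutes {0..<m+1}" and nz: "\<forall>u\<in>{0..<m+1}. LL m $$ (u, p u) \<noteq> 0"
  shows "p = id \<or> (\<exists>i\<in>{1..m}. p = Transposition.transpose 0 i)"
proof -
  have inj: "inj p" using p by (rule permutes_inj)
  have pin: "p u < m+1" if "u < m+1" for u using p that by (simp add: permutes_in_image)
  have out: "p u = u" if "\<not> u < m+1" for u using p that by (simp add: permutes_not_in)
  have red: "p u = u \<or> p u = 0" if u: "u < m+1" "u \<noteq> 0" for u
  proof (rule ccontr)
    assume c: "\<not> (p u = u \<or> p u = 0)"
    have "LL m $$ (u, p u) = (if u = p u then Var u else if u = 0 \<or> p u = 0 then -1 else 0)"
      by (rule L_ent[OF u(1) pin[OF u(1)]])
    then have "LL m $$ (u, p u) = 0" using c u by auto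
    then show False using nz u by simp
  qed
  show ?thesis
  proof (cases "p 0 = 0")
    case True
    have "p = id"
    proof
      fix u show "p u = id u"
      proof (cases "u < m+1")
        case T: True
        show ?thesis
        proof (cases "u = 0")
          case False
          have "p u \<noteq> p 0" using inj False unfolding inj_def by blast
          then show ?thesis using red[OF T False] True by auto
        qed (simp add: True)
      qed (simp add: out)
    qed
    then show ?thesis by simp
  next
    case False
    define i where "i = p 0"
    have i1: "i \<in> {1..m}" using False pin[of 0] unfolding i_def by auto
    have "p i \<noteq> p 0" using inj False unfolding inj_def i_def by metis
    then have "p i \<noteq> i" unfolding i_def by simp
    then have pi: "p i = 0" using red[of i] i1 by auto
    have "p = Transposition.transpose 0 i"
    proof
      fix u show "p u = Transposition.transpose 0 i u"
      proof (cases "u = 0")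
        case True then show ?thesis by (simp add: i_def)
      next
        case u0: False
        show ?thesis
        proof (cases "u = i")
          case True then show ?thesis using pi by simp
        next
          case ui: False
          have "p u = u"
          proof (cases "u < m+1")
            case True
            have "p u \<noteq> p i" using inj ui unfolding inj_def by blast
            then show ?thesis using red[OF True u0] pi by auto
          qed (simp add: out)
          then show ?thesis using u0 ui by simp
        qed
      qed
    qed
    then show ?thesis using i1 by blast
  qed
qed

lemma det_full:
  "det (LL m) = Var 0 * (\<Prod>i\<in>{1..m}. Var i) - (\<Sum>i\<in>{1..m}. \<Prod>j\<in>{1..m} - {i}. Var j)"
proof -
  define trm where "trm = (\<lambda>p. signof p * (\<Prod>i=0..<m+1. LL m $$ (i, p i)) :: zpoly)"
  define P where "P = {p. p permutes {0..<m+1}}"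
  define P0 where "P0 = insert id ((\<lambda>i. Transposition.transpose 0 i) ` {1..m})"
  have fP: "finite P" unfolding P_def by (rule finite_permutations) simp
  have P0P: "P0 \<subseteq> P" unfolding P0_def P_def by (auto intro!: permutes_swap_id)
  have z: "\<forall>p\<in>P - P0. trm p = 0"
  proof
    fix p assume "p \<in> P - P0"
    then have p: "p permutes {0..<m+1}" and pn: "p \<notin> P0" unfolding P_def by auto
    show "trm p = 0"
    proof (rule ccontr)
      assume nz: "trm p \<noteq> 0"
      have "\<forall>u\<in>{0..<m+1}. LL m $$ (u, p u) \<noteq> 0"
      proof
        fix u assume u: "u \<in> {0..<m+1}"
        show "LL m $$ (u, p u) \<noteq> 0"
        proof
          assume "LL m $$ (u, p u) = 0"
          then have "(\<Prod>i=0..<m+1. LL m $$ (i, p i)) = 0"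
            using u by (intro prod_zero) auto
          then show False using nz unfolding trm_def by simp
        qed
      qed
      then have "p = id \<or> (\<exists>i\<in>{1..m}. p = Transposition.transpose 0 i)" by (rule perm_cases[OF p])
      then show False using pn unfolding P0_def by auto
    qed
  qed
  have "det (LL m) = sum trm P"
    unfolding det_def'[OF L_carrier] trm_def P_def by simp
  also have "\<dots> = sum trm P0"
    by (rule sum.mono_neutral_right[OF fP P0P z])
  also have "\<dots> = trm id + (\<Sum>i\<in>{1..m}. trm (Transposition.transpose 0 i))"
  proof -
    have nid: "id \<notin> (\<lambda>i. Transposition.transpose 0 i) ` {1..m}"
    proof
      assume "id \<in> (\<lambda>i. Transposition.transpose (0::nat) i) ` {1..m}"
      then obtain i where "i \<in> {1..m}" "id = Transposition.transpose 0 i" by auto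
      then have "id 0 = Transposition.transpose 0 i 0" by simp
      then show False using \<open>i \<in> {1..m}\<close> by simp
    qed
    have inj: "inj_on (\<lambda>i. Transposition.transpose (0::nat) i) {1..m}"
    proof (rule inj_onI)
      fix a b assume "Transposition.transpose (0::nat) a = Transposition.transpose 0 b"
      then have "Transposition.transpose (0::nat) a 0 = Transposition.transpose 0 b 0" by simp
      then show "a = b" by simp
    qed
    show ?thesis unfolding P0_def
      using sum.insert[OF finite_imageI[OF finite_atLeastAtMost] nid, of trm] sum.reindex[OF inj, of trm]
      by (simp add: comp_def)
  qed
  also have "trm id = Var 0 * (\<Prod>i\<in>{1..m}. Var i)"
  proof -
    have "(\<Prod>i=0..<m+1. LL m $$ (i, id i)) = (\<Prod>i=0..<m+1. Var i)"
    proof (rule prod.cong[OF refl])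
      fix i assume "i \<in> {0..<m+1}"
      then have "i < m+1" by simp
      then show "LL m $$ (i, id i) = Var i" using L_ent[of i m i] by simp
    qed
    also have "\<dots> = Var 0 * (\<Prod>i\<in>{1..m}. Var i)"
    proof -
      have "{0..<m+1} = insert 0 {1..m}" by auto
      then show ?thesis by simp
    qed
    finally have X: "(\<Prod>i=0..<m+1. LL m $$ (i, id i)) = Var 0 * (\<Prod>i\<in>{1..m}. Var i)" .
    show ?thesis unfolding trm_def X by (simp add: signof_id)
  qed
  also have "(\<Sum>i\<in>{1..m}. trm (Transposition.transpose 0 i)) = (\<Sum>i\<in>{1..m}. - (\<Prod>j\<in>{1..m} - {i}. Var j))"
  proof (rule sum.cong[OF refl])
    fix i assume i: "i \<in> {1..m}"
    let ?t = "Transposition.transpose (0::nat) i"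
    have s: "(signof ?t :: zpoly) = -1" using i by (simp add: sign_swap_id)
    have set: "{0..<m+1} = insert 0 (insert i ({1..m} - {i}))" using i by auto
    have "(\<Prod>u=0..<m+1. LL m $$ (u, ?t u)) = LL m $$ (0, ?t 0) * (LL m $$ (i, ?t i) * (\<Prod>u\<in>{1..m} - {i}. LL m $$ (u, ?t u)))"
    proof -
      have f1: "finite (insert i ({1..m} - {i}))" "0 \<notin> insert i ({1..m} - {i})"
        "finite ({1..m} - {i})" "i \<notin> {1..m} - {i}" using i by auto
      show ?thesis unfolding set prod.insert[OF f1(1) f1(2)] prod.insert[OF f1(3) f1(4)] by (rule refl)
    qed
    also have "(\<Prod>u\<in>{1..m} - {i}. LL m $$ (u, ?t u)) = (\<Prod>u\<in>{1..m} - {i}. Var u)"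
    proof (rule prod.cong[OF refl])
      fix u assume u: "u \<in> {1..m} - {i}"
      then have "?t u = u" "u < m+1" by auto
      then show "LL m $$ (u, ?t u) = Var u" using L_ent[of u m u] by simp
    qed
    also have "LL m $$ (0, ?t 0) = -1" using i L_ent[of 0 m i] by simp
    also have "LL m $$ (i, ?t i) = -1" using i L_ent[of i m 0] by simp
    finally show "trm ?t = - (\<Prod>j\<in>{1..m} - {i}. Var j)" unfolding trm_def s by simp
  qed
  finally show ?thesis by (simp add: sum_negf)
qed



lemma crit_not_UNIV:
  assumes y: "3 \<le> y" shows "crit_ideal (m+1) star_mu y \<noteq> UNIV"
proof
  assume U: "crit_ideal (m+1) star_mu y = UNIV"
  have sub: "crit_ideal (m+1) star_mu y \<subseteq> ideal_gen (GG m (y - 2))" by (rule crit_sub) (use y in simp)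
  have gen0: "cterm s = 0" if "s \<in> GG m (y - 2)" for s
  proof -
    from that have "\<exists>T. s = (\<Prod>t\<in>T. Var t) \<and> T \<subseteq> {1..m} \<and> card T = y - 2"
      unfolding GG_def by (simp only: mem_Collect_eq)
    then obtain T where T: "T \<subseteq> {1..m}" "card T = y - 2" "s = (\<Prod>t\<in>T. Var t)"
      by blast
    have c0: "card T \<noteq> 0" using T(2) y by arith
    have fT: "finite T"
    proof (rule ccontr)
      assume "infinite T" then have "card T = 0" by (rule card.infinite)
      then show False using c0 by simp
    qed
    have ne: "T \<noteq> {}"
    proof
      assume "T = {}" then have "card T = 0" by (simp only: card.empty)
      then show False using c0 by simp
    qed
    from ne obtain t where t: "t \<in> T" by blast
    have "cterm s = (\<Prod>t\<in>T. cterm (Var t))" unfolding T(3) by (rule cterm_prod)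
    also have "\<dots> = 0" by (rule prod_zero[OF fT], rule bexI[of _ t]) (simp_all add: cterm_Var t)
    finally show ?thesis .
  qed
  have "(1::zpoly) \<in> crit_ideal (m+1) star_mu y" using U by simp
  then have "(1::zpoly) \<in> ideal_gen (GG m (y - 2))" by (rule subsetD[OF sub])
  then have one: "(1::zpoly) \<in> ideal_gen (GG m (y - 2))" .
  have "cterm 1 = 0"
  proof (rule cterm_ideal)
    fix s assume "s \<in> GG m (y - 2)" then show "cterm s = 0" by (rule gen0)
  next
    show "1 \<in> ideal_gen (GG m (y - 2))" by (rule one)
  qed
  then show False by (simp add: cterm_one)
qed

lemma crit_2: assumes "2 \<le> m" shows "crit_ideal (m+1) star_mu 2 = UNIV"
proof -
  have "(\<Prod>s\<in>({}::nat set). Var s) \<in> crit_ideal (m+1) star_mu (card ({}::nat set) + 2)"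
    by (rule prod_in_crit[of "{}" m]) (use assms in auto)
  then have "1 \<in> crit_ideal (m+1) star_mu (0 + 2)" by (simp only: prod.empty card.empty)
  then have "1 \<in> crit_ideal (m+1) star_mu 2" by (simp only: add_0)
  then show ?thesis unfolding crit_ideal_def by (rule ideal_gen_UNIV)
qed

lemma algco_star: assumes "2 \<le> m" shows "algco (m+1) star_mu = 2"
  unfolding algco_def
proof (rule Greatest_equality)
  show "crit_ideal (m + 1) star_mu 2 = UNIV" by (rule crit_2[OF assms])
  fix y assume "crit_ideal (m + 1) star_mu y = UNIV"
  then show "y \<le> 2" using crit_not_UNIV[of y m] by linarith
qed

lemma crit_k:
  assumes m: "3 \<le> m" and k: "1 \<le> k" "k \<le> m - 2"
  shows "crit_ideal (m + 1) star_mu (2 + k) = ideal_gen {(\<Prod>s\<in>J. Var s) | J. J \<subseteq> {1..m} \<and> card J = k}"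
proof
  show "crit_ideal (m + 1) star_mu (2 + k) \<subseteq> ideal_gen {(\<Prod>s\<in>J. Var s) | J. J \<subseteq> {1..m} \<and> card J = k}"
    using crit_sub[of "2+k" m] unfolding GG_def by simp
  show "ideal_gen {(\<Prod>s\<in>J. Var s) | J. J \<subseteq> {1..m} \<and> card J = k} \<subseteq> crit_ideal (m + 1) star_mu (2 + k)"
    unfolding crit_ideal_def
  proof (rule ideal_gen_subset)
    show "{(\<Prod>s\<in>J. Var s) | J. J \<subseteq> {1..m} \<and> card J = k} \<subseteq> ideal_gen (minors (genlap (m + 1) star_mu) (2 + k))"
    proof
      fix x assume "x \<in> {(\<Prod>s\<in>J. Var s) | J. J \<subseteq> {1..m} \<and> card J = k}"
      then obtain T where T: "T \<subseteq> {1..m}" "card T = k" "x = (\<Prod>s\<in>T. Var s)" by blast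
      have "card T + 2 \<le> m" using T(2) k m by simp
      from prod_in_crit[OF T(1) this] show "x \<in> ideal_gen (minors (genlap (m + 1) star_mu) (2 + k))"
        unfolding crit_ideal_def T(3) using T(2) by (simp add: add.commute)
    qed
  qed
qed

lemma crit_top:
  "crit_ideal (m + 1) star_mu (m + 1) =
        ideal_gen {Var 0 * (\<Prod>i\<in>{1..m}. Var i) - (\<Sum>i\<in>{1..m}. \<Prod>j\<in>{1..m} - {i}. Var j)}"
proof -
  have "minors (LL m) (m+1) = {det (LL m)}"
  proof
    show "minors (LL m) (m+1) \<subseteq> {det (LL m)}"
    proof
      fix x assume "x \<in> minors (LL m) (m+1)"
      then obtain I J where IJ: "I \<subseteq> {..<m+1}" "J \<subseteq> {..<m+1}" "card I = m+1" "card J = m+1"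
        and x: "x = det (submatrix (LL m) I J)" unfolding minors_L by blast
      have "I = {..<m+1}" using card_subset_eq[OF finite_lessThan IJ(1)] IJ(3) by simp
      moreover have "J = {..<m+1}" using card_subset_eq[OF finite_lessThan IJ(2)] IJ(4) by simp
      ultimately show "x \<in> {det (LL m)}" using x submatrix_full[OF L_carrier] by simp
    qed
    have "det (submatrix (LL m) {..<m+1} {..<m+1}) \<in> minors (LL m) (m+1)"
      unfolding minors_L
      by (rule CollectI, rule exI[of _ "{..<m+1}"], rule exI[of _ "{..<m+1}"]) simp
    then show "{det (LL m)} \<subseteq> minors (LL m) (m+1)"
      using submatrix_full[OF L_carrier, of "m+1" star_mu] by simp
  qed
  then show ?thesis unfolding crit_ideal_def det_full by simp
qed


theorem theorem5p1:
  fixes m :: nat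
  assumes "m \<ge> 3"
  shows "algco (m + 1) star_mu = 2
    \<and> (\<forall>k. 1 \<le> k \<and> k \<le> m - 2 \<longrightarrow>
         crit_ideal (m + 1) star_mu (2 + k) =
           ideal_gen {(\<Prod>s\<in>J. Var s) | J. J \<subseteq> {1..m} \<and> card J = k})
    \<and> crit_ideal (m + 1) star_mu (m + 1) =
        ideal_gen {Var 0 * (\<Prod>i\<in>{1..m}. Var i) - (\<Sum>i\<in>{1..m}. \<Prod>j\<in>{1..m} - {i}. Var j)}"
proof (intro conjI allI impI)
  show "algco (m + 1) star_mu = 2" using assms by (intro algco_star) simp
next
  fix k assume k: "1 \<le> k \<and> k \<le> m - 2"
  show "crit_ideal (m + 1) star_mu (2 + k) =
           ideal_gen {(\<Prod>s\<in>J. Var s) | J. J \<subseteq> {1..m} \<and> card J = k}"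
    using k by (intro crit_k[OF assms]) simp_all
next
  show "crit_ideal (m + 1) star_mu (m + 1) =
        ideal_gen {Var 0 * (\<Prod>i\<in>{1..m}. Var i) - (\<Sum>i\<in>{1..m}. \<Prod>j\<in>{1..m} - {i}. Var j)}"
    by (rule crit_top)
qed

end
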